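(* Let $\tau$ be a positive random variable with finite mean such that $t\mapsto\mathbb P(\tau\ge t)$ is continuous and $\mathbb P(\tau>t+s)\le\mathbb P(\tau>t)\,\mathbb P(\tau>s)$ for all $t,s\ge0$. Then $\mathbb P(\tau<t)\le e\,t/\mathbb E(\tau)$ for all $t>0$. *)

theory Defs
  imports "HOL-Probability.Probability"
begin

end

theory Submission
  imports Defs
begin

theorem mainTheorem8:
  fixes M :: "'a measure" and \<tau> :: "'a \<Rightarrow> real"
  assumes "prob_space M"
    and meas: "\<tau> \<in> borel_measurable M"
    and pos: "\<forall>x\<in>space M. \<tau> x > 0"
    and int: "integrable M \<tau>"
    and cont: "continuous_on UNIV (\<lambda>t. measure M {x\<in>space M. \<tau> x \<ge> t})"
    and submult: "\<And>t s. t \<ge> 0 \<Longrightarrow> s \<ge> 0 \<Longrightarrow>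
       measure M {x\<in>space M. \<tau> x > t + s}
         \<le> measure M {x\<in>space M. \<tau> x > t} * measure M {x\<in>space M. \<tau> x > s}"
  shows "\<And>t. t > 0 \<Longrightarrow>
     measure M {x\<in>space M. \<tau> x < t} \<le> exp 1 * t / integral\<^sup>L M \<tau>"
proof -
  interpret P: prob_space M by fact
  fix t :: real assume t: "t > 0"
  define p where "p = measure M {x\<in>space M. \<tau> x < t}"
  define g where "g = measure M {x\<in>space M. \<tau> x > t}"
  define E where "E = integral\<^sup>L M \<tau>"
  have Sm: "\<And>c. {x\<in>space M. \<tau> x > c} \<in> sets M" "\<And>c. {x\<in>space M. \<tau> x < c} \<in> sets M"
    using meas by measurable
  have "E \<ge> 0" unfolding E_def using pos by (intro integral_nonneg_AE) (auto intro: less_imp_le)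
  have Epos: "E > 0"
  proof (rule ccontr)
    assume "\<not> E > 0"
    with \<open>E \<ge> 0\<close> have "E = 0" by simp
    hence "AE x in M. \<tau> x = 0" unfolding E_def
      using integral_nonneg_eq_0_iff_AE[OF int] pos by (auto intro: less_imp_le)
    moreover have "AE x in M. \<tau> x > 0" using pos by (intro AE_I2) auto
    ultimately have "AE x in M. False" by eventually_elim auto
    thus False by simp
  qed
  have "g + p \<le> 1"
  proof -
    have "g + p = measure M ({x\<in>space M. \<tau> x > t} \<union> {x\<in>space M. \<tau> x < t})"
      unfolding g_def p_def using Sm by (subst P.finite_measure_Union) auto
    also have "\<dots> \<le> 1" by simp
    finally show ?thesis .
  qed
  have g0: "g \<ge> 0" unfolding g_def by simp
  show "p \<le> exp 1 * t / integral\<^sup>L M \<tau>"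
  proof (cases "p = 0")
    case True thus ?thesis using Epos t unfolding E_def by simp
  next
    case False
    hence pp: "p > 0" unfolding p_def by (simp add: less_le)
    hence g1: "g < 1" using \<open>g + p \<le> 1\<close> by simp
    have Gn: "measure M {x\<in>space M. \<tau> x > real n * t} \<le> g ^ n" for n
    proof (induction n)
      case 0 show ?case by simp
    next
      case (Suc n)
      have "measure M {x\<in>space M. \<tau> x > real (Suc n) * t}
          = measure M {x\<in>space M. \<tau> x > real n * t + t}" by (simp add: algebra_simps)
      also have "\<dots> \<le> measure M {x\<in>space M. \<tau> x > real n * t} * g"
        unfolding g_def using submult[of "real n * t" t] t by simp
      also have "\<dots> \<le> g ^ n * g" using Suc g0 by (intro mult_right_mono) auto
      finally show ?case by (simp add: mult.commute)
    qed
    define f where "f n x = ennreal t * indicator {y\<in>space M. \<tau> y > real n * t} x" for n x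
    have pw: "ennreal (\<tau> x) \<le> (\<Sum>n. f n x)" if x: "x \<in> space M" for x
    proof -
      define N where "N = nat \<lceil>\<tau> x / t\<rceil>"
      have "\<tau> x \<le> real N * t"
      proof -
        have "\<tau> x / t \<le> real N" unfolding N_def by linarith
        thus ?thesis using t by (simp add: field_simps)
      qed
      have lt: "real n * t < \<tau> x" if "n < N" for n
      proof -
        have "real n < \<tau> x / t" using that unfolding N_def by linarith
        thus ?thesis using t by (simp add: field_simps)
      qed
      have "(\<Sum>n<N. f n x) = (\<Sum>n<N. ennreal t)"
        using lt x by (intro sum.cong) (auto simp: f_def)
      also have "\<dots> = ennreal (real N * t)" using t by (simp add: ennreal_mult ennreal_of_nat_eq_real_of_nat)
      finally have "ennreal (\<tau> x) \<le> (\<Sum>n<N. f n x)"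
        using \<open>\<tau> x \<le> real N * t\<close> by (simp add: ennreal_leI)
      also have "\<dots> \<le> (\<Sum>n. f n x)" by (rule sum_le_suminf) auto
      finally show ?thesis .
    qed
    have fm: "f n \<in> borel_measurable M" for n unfolding f_def using Sm by measurable
    have "ennreal E = (\<integral>\<^sup>+ x. ennreal (\<tau> x) \<partial>M)"
      unfolding E_def using int pos by (subst nn_integral_eq_integral) (auto intro: less_imp_le)
    also have "\<dots> \<le> (\<integral>\<^sup>+ x. (\<Sum>n. f n x) \<partial>M)"
      by (intro nn_integral_mono pw)
    also have "\<dots> = (\<Sum>n. integral\<^sup>N M (f n))" by (rule nn_integral_suminf[OF fm])
    also have "\<dots> = (\<Sum>n. ennreal t * emeasure M {y\<in>space M. \<tau> y > real n * t})"
      unfolding f_def using Sm by (simp add: nn_integral_cmult_indicator)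
    also have "\<dots> \<le> (\<Sum>n. ennreal (t * g ^ n))"
    proof (intro suminf_le allI)
      fix n
      have "emeasure M {y\<in>space M. \<tau> y > real n * t} = ennreal (measure M {y\<in>space M. \<tau> y > real n * t})"
        by (simp add: P.emeasure_eq_measure)
      also have "\<dots> \<le> ennreal (g ^ n)" using Gn by (simp add: ennreal_leI)
      finally show "ennreal t * emeasure M {y\<in>space M. \<tau> y > real n * t} \<le> ennreal (t * g ^ n)"
        using t g0 by (simp add: ennreal_mult mult_left_mono)
    qed auto
    also have "\<dots> = ennreal (t * (1 / (1 - g)))"
      using g0 g1 t by (intro suminf_ennreal_eq sums_mult geometric_sums) auto
    finally have "E \<le> t / (1 - g)" using g1 t by (simp add: ennreal_le_iff)
    hence "E * (1 - g) \<le> t" using g1 by (simp add: field_simps)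
    moreover have "E * p \<le> E * (1 - g)" using \<open>g + p \<le> 1\<close> \<open>E \<ge> 0\<close> by (intro mult_left_mono) auto
    ultimately have "E * p \<le> t" by linarith
    hence "p \<le> t / E" using Epos by (simp add: field_simps)
    also have "\<dots> \<le> exp 1 * t / E" using t Epos by (simp add: divide_right_mono)
    finally show ?thesis unfolding p_def E_def .
  qed
qed

end
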